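(* Let $\mathbf u$ be an infinite word over a finite alphabet whose language is closed under reversal and whose defect $D(\mathbf u)$ is finite. Let $q$ be a prefix of $\mathbf u$ such that $D(\mathbf u)=D(q)$. Then for every prefix $p$ of $\mathbf u$ with $|p|>|q|$, $$\#\{x\in\mathcal L(p): x \text{ is a palindrome},\ |x|\le |q|,\ x\notin\mathcal L(q)\}+\sum_{n=|q|+1}^{|p|}\mathcal P_p(n)=|p|-|q|.$$
   Context: For a finite word $w=w_0\cdots w_{n-1}$ its reversal is $\overline{w}=w_{n-1}\cdots w_0$; $w$ is a palindrome if $w=\overline{w}$ (the empty word is a palindrome). $\mathcal L(v)$ denotes the set of factors of a (finite or infinite) word $v$; the language of $\mathbf u$ is closed under reversal if $w\in\mathcal L(\mathbf u)$ implies $\overline w\in\mathcal L(\mathbf u)$. For a finite word $p$, $\mathcal P_p(n)$ is the number of palindromes of length $n$ that are factors of $p$. The defect of a finite word $w$ is $D(w)=|w|+1-(\text{number of distinct palindromic factors of } w, \text{ including the empty word})$; the defect of an infinite word is $D(\mathbf u)=\sup\{D(w): w \text{ a prefix of } \mathbf u\}$. *)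

theory Defs
  imports Main "HOL-Library.Sublist" "HOL-Library.Extended_Nat"
begin

text \<open>Infinite words are functions nat => 'a; finite words are lists.
  Factors of a finite word are contiguous sublists (Sublist.sublist).\<close>

definition pref :: "(nat \<Rightarrow> 'a) \<Rightarrow> nat \<Rightarrow> 'a list" where
  "pref u n = map u [0..<n]"

definition lang_inf :: "(nat \<Rightarrow> 'a) \<Rightarrow> 'a list set" where
  "lang_inf u = {x. \<exists>i. x = map u [i..<i + length x]}"

definition lang :: "'a list \<Rightarrow> 'a list set" where
  "lang w = {x. sublist x w}"

definition is_pal :: "'a list \<Rightarrow> bool" where
  "is_pal w \<longleftrightarrow> rev w = w"

definition closed_rev :: "(nat \<Rightarrow> 'a) \<Rightarrow> bool" where
  "closed_rev u \<longleftrightarrow> (\<forall>w \<in> lang_inf u. rev w \<in> lang_inf u)"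

definition pal_count :: "'a list \<Rightarrow> nat \<Rightarrow> nat" where
  "pal_count p n = card {x \<in> lang p. is_pal x \<and> length x = n}"

definition defect :: "'a list \<Rightarrow> nat" where
  "defect w = length w + 1 - card {x \<in> lang w. is_pal x}"

definition defect_inf :: "(nat \<Rightarrow> 'a) \<Rightarrow> enat" where
  "defect_inf u = (SUP n. enat (defect (pref u n)))"

end

theory Submission
  imports Defs
begin

definition PS :: "'a list \<Rightarrow> 'a list set" where
  "PS w = {x \<in> lang w. is_pal x}"

lemma finite_lang: "finite (lang w)"
  unfolding lang_def by (metis List.finite_set set_sublists_eq)

lemma finite_PS: "finite (PS w)"
  unfolding PS_def using finite_lang[of w] by simp

lemma PS_mono: "PS w \<subseteq> PS (w @ [a])"
  unfolding PS_def lang_def using sublist_order.order_trans by fastforce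

lemma new_pal_unique:
  assumes x: "x \<in> PS (w @ [a]) - PS w" and y: "y \<in> PS (w @ [a]) - PS w"
    and len: "length x \<le> length y"
  shows "x = y"
proof (rule ccontr)
  assume ne: "x \<noteq> y"
  have sx: "suffix x (w @ [a])" and nx: "\<not> sublist x w"
    using x unfolding PS_def lang_def by (auto simp: sublist_snoc)
  have sy: "suffix y (w @ [a])" and py: "rev y = y"
    using y unfolding PS_def lang_def is_pal_def by (auto simp: sublist_snoc)
  have px: "rev x = x" using x unfolding PS_def is_pal_def by auto
  have "suffix x y"
  proof (cases "suffix x y")
    case False
    then have yx: "suffix y x" using suffix_same_cases[OF sx sy] by auto
    then have "length y \<le> length x" by (rule suffix_length_le)
    from yx obtain z where "x = z @ y" by (auto simp: suffix_def)
    with len have "x = y" by simp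
    then show ?thesis by simp
  qed simp
  then have "prefix (rev x) (rev y)" by (simp add: suffix_to_prefix)
  then have "prefix x y" using px py by simp
  then obtain t where yt: "y = x @ t" by (auto simp: prefix_def)
  with ne have "t \<noteq> []" by auto
  then obtain t' b where tb: "t = t' @ [b]" by (metis rev_exhaust)
  from sy obtain r where "w @ [a] = r @ y" by (auto simp: suffix_def)
  then have "w = r @ x @ t'" using yt tb by simp
  then have "sublist x w" by auto
  with nx show False by simp
qed

lemma PS_snoc_card: "card (PS (w @ [a])) \<le> card (PS w) + 1"
proof -
  let ?D = "PS (w @ [a]) - PS w"
  have "card ?D \<le> 1"
  proof -
    have "finite ?D" using finite_PS by auto
    moreover have "\<forall>x\<in>?D. \<forall>y\<in>?D. x = y"
      using new_pal_unique by (metis nat_le_linear)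
    ultimately show ?thesis using card_le_Suc0_iff_eq by auto
  qed
  moreover have "card (PS (w @ [a])) = card (PS w) + card ?D"
    using PS_mono[of w a] finite_PS
    by (metis card_Diff_subset card_mono add_diff_inverse_nat not_less finite_subset)
  ultimately show ?thesis by simp
qed

lemma PS_card_le: "card (PS w) \<le> length w + 1"
proof (induction w rule: rev_induct)
  case Nil
  have e: "PS ([]::'a list) = {[]}" unfolding PS_def lang_def is_pal_def by auto
  show ?case by (simp add: e)
next
  case (snoc a w)
  then show ?case using PS_snoc_card[of w a] by simp
qed

lemma defect_PS: "defect w = length w + 1 - card (PS w)"
  unfolding defect_def PS_def by simp

lemma pref_Suc: "pref u (Suc n) = pref u n @ [u n]"
  unfolding pref_def by simp

lemma length_pref[simp]: "length (pref u n) = n"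
  unfolding pref_def by simp

lemma defect_snoc: "defect w \<le> defect (w @ [a])"
  unfolding defect_PS using PS_snoc_card[of w a] PS_card_le[of w] by simp

lemma defect_pref_mono: "m \<le> n \<Longrightarrow> defect (pref u m) \<le> defect (pref u n)"
proof (induction n rule: dec_induct)
  case base then show ?case by simp
next
  case (step n) then show ?case using defect_snoc[of "pref u n" "u n"] pref_Suc[of u n] by simp
qed

lemma pref_prefix: "m \<le> n \<Longrightarrow> prefix (pref u m) (pref u n)"
  unfolding pref_def
  by (metis le_add_diff_inverse map_append prefixI upt_add_eq_append zero_le)

theorem lemma11:
  fixes u :: "nat \<Rightarrow> 'a" and m n :: nat
  assumes "finite (range u)"
    and "closed_rev u"
    and "defect_inf u \<noteq> \<infinity>"
    and "defect_inf u = enat (defect (pref u m))"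
    and "n > m"
  shows "card {x \<in> lang (pref u n). is_pal x \<and> length x \<le> m \<and> x \<notin> lang (pref u m)}
           + (\<Sum>k = m + 1..n. pal_count (pref u n) k) = n - m"
proof -
  let ?p = "pref u n" and ?q = "pref u m"
  have "enat (defect ?p) \<le> defect_inf u" unfolding defect_inf_def by (rule SUP_upper) auto
  then have d1: "defect ?p \<le> defect ?q" using assms(4) by simp
  have d2: "defect ?q \<le> defect ?p" using defect_pref_mono[of m n u] assms(5) by simp
  have cp: "card (PS ?p) \<le> n + 1" and cq: "card (PS ?q) \<le> m + 1"
    using PS_card_le[of ?p] PS_card_le[of ?q] by auto
  have ceq: "card (PS ?p) = card (PS ?q) + (n - m)"
    using d1 d2 cp cq assms(5) unfolding defect_PS by simp
  have sub: "PS ?q \<subseteq> PS ?p"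
    using pref_prefix[of m n u] assms(5) unfolding PS_def lang_def
    by (auto intro: sublist_order.order_trans)
  have c2: "card (PS ?p) = card (PS ?q) + card (PS ?p - PS ?q)"
    using sub finite_PS
    by (metis card_Diff_subset card_mono add_diff_inverse_nat not_less finite_subset)
  let ?A = "{x \<in> lang ?p. is_pal x \<and> length x \<le> m \<and> x \<notin> lang ?q}"
  let ?B = "\<Union>k\<in>{m+1..n}. {x \<in> lang ?p. is_pal x \<and> length x = k}"
  have split: "PS ?p - PS ?q = ?A \<union> ?B"
  proof (rule set_eqI, rule iffI)
    fix x assume "x \<in> PS ?p - PS ?q"
    then have "x \<in> lang ?p" "is_pal x" "x \<notin> lang ?q" unfolding PS_def by auto
    moreover have "length x \<le> n" using \<open>x \<in> lang ?p\<close> unfolding lang_def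
      using sublist_length_le by fastforce
    ultimately show "x \<in> ?A \<union> ?B" by auto
  next
    fix x assume "x \<in> ?A \<union> ?B"
    moreover have "x \<notin> lang ?q" if "length x > m" using that unfolding lang_def
      using sublist_length_le by fastforce
    ultimately show "x \<in> PS ?p - PS ?q" unfolding PS_def by auto
  qed
  have fA: "finite ?A" using finite_lang[of ?p] by auto
  have fB: "finite ?B" using finite_lang[of ?p] by auto
  have disj: "?A \<inter> ?B = {}" by auto
  have cB: "card ?B = (\<Sum>k = m + 1..n. pal_count ?p k)"
    unfolding pal_count_def
    by (subst card_UN_disjoint) (auto intro: finite_subset[OF _ finite_lang[of ?p]])
  have "card (PS ?p - PS ?q) = card ?A + card ?B"
    unfolding split using card_Un_disjoint[OF fA fB disj] .
  then show ?thesis using ceq c2 cB by simp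
qed

end
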